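(* Let $c,o$ be vertices with a directed path from $c$ to $o$. Suppose the open loop $M(s)$ is strictly proper with relative degree $\chi=\deg(ap)-\deg(bq)\ge 1$. Then the relative degree of $T_{co}(s)$ (degree of denominator minus degree of numerator, in lowest terms) is $(\delta_{co}+1)\chi$.
   Context: $\mathcal G$ is a weighted directed graph on $\{1,\dots,N\}$ with adjacency matrix $A=[a_{ij}]$. Here $a_{ij}>0$ if there is an arc from $j$ to $i$ and $a_{ij}=0$ otherwise (no self-loops). The Laplacian is $L=D-A$ with $D=\mathrm{diag}(\sum_j a_{ij})$. A directed path from $u$ to $w$ is a sequence of distinct vertices $u=v_0,\dots,v_\ell=w$ with an arc from $v_k$ to $v_{k+1}$ for each $k$, and $\ell$ is its length. $\delta_{uw}$ is the length of a shortest directed path from $u$ to $w$. $e_i$ is the $i$-th canonical basis vector. Let $a,b,p,q$ be nonzero real polynomials and $M(s)=\frac{b(s)q(s)}{a(s)p(s)}$. The network is $y=M(s)[-Ly+r]$. $T_{co}(s)=e_o^T(I+M(s)L)^{-1}M(s)e_c$ is the transfer function from $r_c$ to $y_o$ with all other inputs zero. *)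

theory Defs
  imports "HOL-Analysis.Analysis" "HOL-Computational_Algebra.Computational_Algebra"
begin

type_synonym ratfun = "real poly fract"

definition rconst :: "real \<Rightarrow> ratfun" where
  "rconst x = to_fract [:x:]"

definition rel_deg :: "ratfun \<Rightarrow> int" where
  "rel_deg f = (THE r. \<exists>n d. n \<noteq> 0 \<and> d \<noteq> 0 \<and> coprime n d \<and> f = Fract n d \<and>
                        r = int (degree d) - int (degree n))"

(* weighted digraph: A $ i $ j > 0 iff arc from j to i *)
definition laplacian :: "real^'n^'n \<Rightarrow> real^'n^'n" where
  "laplacian A = (\<chi> i j. (if i = j then (\<Sum>k\<in>UNIV. A $ i $ k) else 0) - A $ i $ j)"

definition is_dpath :: "real^'n^'n \<Rightarrow> 'n \<Rightarrow> 'n \<Rightarrow> 'n list \<Rightarrow> bool" where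
  "is_dpath A u w vs \<longleftrightarrow> vs \<noteq> [] \<and> hd vs = u \<and> last vs = w \<and> distinct vs \<and>
     (\<forall>k. Suc k < length vs \<longrightarrow> A $ (vs ! Suc k) $ (vs ! k) > 0)"

definition dist_path :: "real^'n^'n \<Rightarrow> 'n \<Rightarrow> 'n \<Rightarrow> nat" where
  "dist_path A u w = (LEAST l. \<exists>vs. is_dpath A u w vs \<and> length vs = Suc l)"

definition openloop :: "real poly \<Rightarrow> real poly \<Rightarrow> real poly \<Rightarrow> real poly \<Rightarrow> ratfun" where
  "openloop a b p q = Fract (b * q) (a * p)"

definition transfer :: "ratfun \<Rightarrow> real^'n^'n \<Rightarrow> 'n \<Rightarrow> 'n \<Rightarrow> ratfun" where
  "transfer M L c ob =
     (matrix_inv (mat 1 + (\<chi> i j. M * rconst (L $ i $ j))) **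
        (\<chi> i j. if i = j then M else 0)) $ ob $ c"

end

theory Submission
  imports Defs "HOL-Computational_Algebra.Field_as_Ring"
begin

definition vinf :: "ratfun \<Rightarrow> int" where
  "vinf f = int (degree (snd (quot_of_fract f))) - int (degree (fst (quot_of_fract f)))"

definition good :: "int \<Rightarrow> ratfun \<Rightarrow> bool" where
  "good k f \<longleftrightarrow> f = 0 \<or> k \<le> vinf f"

lemma vinf_Fract:
  assumes "n \<noteq> 0" "d \<noteq> 0"
  shows "vinf (Fract n d) = int (degree d) - int (degree n)"
proof -
  obtain n' d' where q: "quot_of_fract (Fract n d) = (n', d')"
    by (cases "quot_of_fract (Fract n d)")
  have d': "d' \<noteq> 0" using snd_quot_of_fract_nonzero[of "Fract n d"] q by simp
  have "Fract n' d' = Fract n d" using Fract_quot_of_fract[of "Fract n d"] q by simp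
  hence e: "n' * d = n * d'" using d' assms by (simp add: eq_fract)
  have n': "n' \<noteq> 0" using e assms d' by auto
  have "degree n' + degree d = degree n + degree d'"
    using e by (metis degree_mult_eq n' d' assms)
  thus ?thesis using q by (simp add: vinf_def)
qed

lemma Fract_zero: "Fract 0 b = 0"
  by (simp add: Zero_fract_def eq_fract)

lemma rel_deg_vinf:
  assumes "f \<noteq> 0"
  shows "rel_deg f = vinf f"
  unfolding rel_deg_def
proof (rule the_equality)
  show "\<exists>n d. n \<noteq> 0 \<and> d \<noteq> 0 \<and> coprime n d \<and> f = Fract n d \<and>
          vinf f = int (degree d) - int (degree n)"
    apply (rule exI[of _ "fst (quot_of_fract f)"], rule exI[of _ "snd (quot_of_fract f)"])
    using assms coprime_quot_of_fract[of f] by (simp add: vinf_def)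
next
  fix r assume "\<exists>n d. n \<noteq> 0 \<and> d \<noteq> 0 \<and> coprime n d \<and> f = Fract n d \<and>
          r = int (degree d) - int (degree n)"
  then obtain n d where "n \<noteq> 0" "d \<noteq> 0" "f = Fract n d" "r = int (degree d) - int (degree n)"
    by blast
  thus "r = vinf f" using vinf_Fract by simp
qed

lemma vinf_mult:
  assumes "f \<noteq> 0" "g \<noteq> 0"
  shows "vinf (f * g) = vinf f + vinf g"
proof -
  obtain a b where f: "f = Fract a b" "b \<noteq> 0" "a \<noteq> 0"
    using assms(1) by (cases f rule: Fract_cases_nonzero) auto
  obtain c d where g: "g = Fract c d" "d \<noteq> 0" "c \<noteq> 0"
    using assms(2) by (cases g rule: Fract_cases_nonzero) auto
  show ?thesis using f g by (simp add: vinf_Fract degree_mult_eq)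
qed

lemma vinf_uminus: "vinf (- f) = vinf f"
proof (cases "f = 0")
  case False
  then obtain a b where f: "f = Fract a b" "b \<noteq> 0" "a \<noteq> 0"
    by (cases f rule: Fract_cases_nonzero) auto
  show ?thesis using f by (simp add: vinf_Fract)
qed simp

lemma good_add:
  assumes "good k f" "good k g"
  shows "good k (f + g)"
proof (cases "f = 0 \<or> g = 0")
  case True thus ?thesis using assms by auto
next
  case False
  obtain a b where f: "f = Fract a b" "b \<noteq> 0" "a \<noteq> 0"
    using False by (cases f rule: Fract_cases_nonzero) auto
  obtain c d where g: "g = Fract c d" "d \<noteq> 0" "c \<noteq> 0"
    using False by (cases g rule: Fract_cases_nonzero) auto
  have s: "f + g = Fract (a * d + c * b) (b * d)" using f g by simp
  show ?thesis
  proof (cases "a * d + c * b = 0")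
    case True thus ?thesis using s by (simp add: good_def Fract_zero)
  next
    case nz: False
    have vf: "k \<le> int (degree b) - int (degree a)" using assms(1) False f by (simp add: good_def vinf_Fract)
    have vg: "k \<le> int (degree d) - int (degree c)" using assms(2) False g by (simp add: good_def vinf_Fract)
    have "degree (a * d + c * b) \<le> max (degree (a*d)) (degree (c*b))" by (rule degree_add_le_max)
    hence "degree (a * d + c * b) \<le> max (degree a + degree d) (degree c + degree b)"
      using f g by (simp add: degree_mult_eq)
    hence "k \<le> vinf (f + g)" using s vf vg f g nz
      by (simp add: vinf_Fract degree_mult_eq)
    thus ?thesis by (simp add: good_def)
  qed
qed


lemma good_zero[simp]: "good k 0" by (simp add: good_def)

lemma good_mono: "good k f \<Longrightarrow> l \<le> k \<Longrightarrow> good l f"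
  by (auto simp: good_def)

lemma good_uminus: "good k f \<Longrightarrow> good k (- f)"
  by (auto simp: good_def vinf_uminus)

lemma good_diff: "good k f \<Longrightarrow> good k g \<Longrightarrow> good k (f - g)"
  using good_add[of k f "- g"] good_uminus[of k g] by simp

lemma good_mult: "good k f \<Longrightarrow> good l g \<Longrightarrow> good (k + l) (f * g)"
  unfolding good_def by (cases "f = 0"; cases "g = 0") (auto simp: vinf_mult)

lemma good_sum: "finite S \<Longrightarrow> (\<And>x. x \<in> S \<Longrightarrow> good k (f x)) \<Longrightarrow> good k (sum f S)"
  by (induction S rule: finite_induct) (auto intro: good_add)

lemma good_self: "good (vinf f) f" by (simp add: good_def)

lemma vinf_rconst: "vinf (rconst x) = 0"
  by (simp add: rconst_def vinf_def)

lemma rconst_eq_0[simp]: "rconst x = 0 \<longleftrightarrow> x = 0"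
  by (simp add: rconst_def)

lemma good_rconst: "good 0 (rconst x)"
  by (simp add: good_def vinf_rconst)

lemma rconst_0[simp]: "rconst 0 = 0" by (simp add: rconst_def)
lemma rconst_1[simp]: "rconst 1 = 1" by (simp add: rconst_def one_pCons[symmetric])

lemma rconst_add: "rconst (x + y) = rconst x + rconst y"
  unfolding rconst_def to_fract_add[symmetric] by simp

lemma rconst_mult: "rconst (x * y) = rconst x * rconst y"
  unfolding rconst_def to_fract_mult[symmetric] by simp

lemma rconst_uminus: "rconst (- x) = - rconst x"
  unfolding rconst_def to_fract_uminus[symmetric] by simp

lemma rconst_sum: "rconst (sum f S) = (\<Sum>x\<in>S. rconst (f x))"
  by (induction S rule: infinite_finite_induct) (auto simp: rconst_add)

lemma vinf_1[simp]: "vinf 1 = 0" by (simp add: vinf_def)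

lemma vinf_power: "f \<noteq> 0 \<Longrightarrow> vinf (f ^ n) = int n * vinf f"
  by (induction n) (auto simp: vinf_mult algebra_simps)

lemma vinf_sum_strict:
  assumes "t1 \<noteq> 0" "vinf t1 = K" "good (K + 1) t2"
  shows "t1 + t2 \<noteq> 0 \<and> vinf (t1 + t2) = K"
proof -
  have g1: "good K t1" using assms by (simp add: good_def)
  have g2: "good K t2" using assms(3) by (rule good_mono) simp
  have nz: "t1 + t2 \<noteq> 0"
  proof
    assume "t1 + t2 = 0"
    hence "t1 = - t2" by (simp add: eq_neg_iff_add_eq_0)
    hence "good (K + 1) t1" using good_uminus[OF assms(3)] by simp
    thus False using assms(1,2) by (simp add: good_def)
  qed
  have ge: "K \<le> vinf (t1 + t2)" using good_add[OF g1 g2] nz by (simp add: good_def)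
  have "\<not> K + 1 \<le> vinf (t1 + t2)"
  proof
    assume "K + 1 \<le> vinf (t1 + t2)"
    hence "good (K + 1) ((t1 + t2) - t2)"
      using good_diff[of "K+1" "t1+t2" t2] assms(3) by (simp add: good_def)
    thus False using assms(1,2) by (simp add: good_def)
  qed
  thus ?thesis using nz ge by simp
qed

lemma key:
  fixes z e :: "'n::finite \<Rightarrow> ratfun" and Lm :: "'n \<Rightarrow> 'n \<Rightarrow> real"
  assumes M: "1 \<le> vinf M"
    and e: "\<And>i. good k0 (e i)"
    and eq: "\<And>i. z i = e i - M * (\<Sum>j\<in>UNIV. rconst (Lm i j) * z j)"
  shows "good k0 (z i)"
proof (rule ccontr)
  assume ni: "\<not> good k0 (z i)"
  define S where "S = {i. \<not> good k0 (z i)}"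
  have fS: "finite S" by simp
  have iS: "i \<in> S" using ni by (simp add: S_def)
  define \<mu> where "\<mu> = Min ((\<lambda>j. vinf (z j)) ` S)"
  have "\<mu> \<in> (\<lambda>j. vinf (z j)) ` S" unfolding \<mu>_def using fS iS by (intro Min_in) auto
  then obtain i0 where i0: "i0 \<in> S" "vinf (z i0) = \<mu>" by auto
  have le: "\<And>j. j \<in> S \<Longrightarrow> \<mu> \<le> vinf (z j)" unfolding \<mu>_def using fS by auto
  have z0: "z i0 \<noteq> 0" "vinf (z i0) < k0" using i0(1) by (auto simp: S_def good_def)
  have gj: "good \<mu> (z j)" for j
  proof (cases "j \<in> S")
    case True thus ?thesis using le[OF True] by (simp add: good_def)
  next
    case False
    hence "good k0 (z j)" by (simp add: S_def)
    thus ?thesis by (rule good_mono) (use z0 i0 in simp)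
  qed
  have "good (0 + \<mu>) (\<Sum>j\<in>UNIV. rconst (Lm i0 j) * z j)"
    by (intro good_sum good_mult good_rconst gj) simp
  hence "good (1 + \<mu>) (M * (\<Sum>j\<in>UNIV. rconst (Lm i0 j) * z j))"
    using good_mult[OF good_self[of M]] good_mono M by fastforce
  hence g1: "good (min k0 (1 + \<mu>)) (M * (\<Sum>j\<in>UNIV. rconst (Lm i0 j) * z j))"
    by (rule good_mono) simp
  have g2: "good (min k0 (1 + \<mu>)) (e i0)" by (rule good_mono[OF e]) simp
  have "good (min k0 (1 + \<mu>)) (z i0)" using good_diff[OF g2 g1] eq[of i0] by simp
  thus False using z0 i0 by (simp add: good_def)
qed


primrec uu :: "real^'n^'n \<Rightarrow> 'n \<Rightarrow> nat \<Rightarrow> 'n \<Rightarrow> real" where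
  "uu L c 0 = (\<lambda>i. if i = c then 1 else 0)"
| "uu L c (Suc k) = (\<lambda>i. \<Sum>j\<in>UNIV. L$i$j * uu L c k j)"

lemma lap_offdiag:
  fixes A :: "real^'n^'n"
  shows "i \<noteq> j \<Longrightarrow> laplacian A $ i $ j = - A $ i $ j"
  by (simp add: laplacian_def)

lemma path_ext:
  fixes A :: "real^'n^'n"
  assumes p: "is_dpath A c j vs" and a: "A $ i $ j > 0"
  shows "\<exists>ws. is_dpath A c i ws \<and> length ws \<le> Suc (length vs)"
proof (cases "i \<in> set vs")
  case True
  then obtain n where n: "n < length vs" "vs ! n = i" by (auto simp: in_set_conv_nth)
  define ws where "ws = take (Suc n) vs"
  have ws: "ws = take n vs @ [vs ! n]" unfolding ws_def using n by (simp add: take_Suc_conv_app_nth)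
  have "is_dpath A c i ws"
    unfolding is_dpath_def
  proof (intro conjI allI impI)
    show "ws \<noteq> []" using ws by simp
    show "hd ws = c" using p n unfolding ws_def is_dpath_def by (simp add: hd_take)
    show "last ws = i" using ws n by simp
    show "distinct ws" using p unfolding ws_def is_dpath_def by simp
    fix k assume "Suc k < length ws"
    hence "Suc k < length vs" "Suc k < Suc n" using n unfolding ws_def by auto
    thus "0 < A $ (ws ! Suc k) $ (ws ! k)" using p unfolding ws_def is_dpath_def by simp
  qed
  moreover have "length ws \<le> Suc (length vs)" unfolding ws_def by simp
  ultimately show ?thesis by blast
next
  case False
  define ws where "ws = vs @ [i]"
  have vsne: "vs \<noteq> []" and lastj: "last vs = j" using p by (auto simp: is_dpath_def)
  have "is_dpath A c i ws"
    unfolding is_dpath_def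
  proof (intro conjI allI impI)
    show "ws \<noteq> []" using ws_def by simp
    show "hd ws = c" using p vsne unfolding ws_def is_dpath_def by simp
    show "last ws = i" using ws_def by simp
    show "distinct ws" using p False unfolding ws_def is_dpath_def by simp
    fix k assume k: "Suc k < length ws"
    show "0 < A $ (ws ! Suc k) $ (ws ! k)"
    proof (cases "Suc k < length vs")
      case True thus ?thesis using p unfolding ws_def is_dpath_def by (simp add: nth_append)
    next
      case False
      hence "Suc k = length vs" using k ws_def by simp
      moreover have "vs ! k = j" using lastj vsne \<open>Suc k = length vs\<close>
        by (metis diff_Suc_1 last_conv_nth)
      ultimately show ?thesis using a unfolding ws_def by (simp add: nth_append)
    qed
  qed
  moreover have "length ws \<le> Suc (length vs)" unfolding ws_def by simp
  ultimately show ?thesis by blast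
qed

lemma reach:
  fixes A :: "real^'n^'n"
  assumes nonneg: "\<forall>i j. A $ i $ j \<ge> 0"
  shows "uu (laplacian A) c k i \<noteq> 0 \<Longrightarrow> \<exists>vs. is_dpath A c i vs \<and> length vs \<le> Suc k"
proof (induction k arbitrary: i)
  case 0
  hence "i = c" by (simp split: if_splits)
  moreover have "is_dpath A c c [c]" by (simp add: is_dpath_def)
  ultimately show ?case by (intro exI[of _ "[c]"]) simp
next
  case (Suc k)
  have "(\<Sum>j\<in>UNIV. laplacian A $ i $ j * uu (laplacian A) c k j) \<noteq> 0" using Suc.prems by simp
  then obtain j where j: "laplacian A $ i $ j * uu (laplacian A) c k j \<noteq> 0"
    by (rule sum.not_neutral_contains_not_neutral)
  hence "uu (laplacian A) c k j \<noteq> 0" by simp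
  then obtain vs where vs: "is_dpath A c j vs" "length vs \<le> Suc k" using Suc.IH by blast
  show ?case
  proof (cases "j = i")
    case True thus ?thesis using vs by auto
  next
    case False
    hence "A $ i $ j \<noteq> 0" using j lap_offdiag[of i j A] by auto
    hence "A $ i $ j > 0" using nonneg by (metis less_eq_real_def)
    then obtain ws where "is_dpath A c i ws" "length ws \<le> Suc (length vs)"
      using path_ext[OF vs(1)] by blast
    thus ?thesis using vs(2) by auto
  qed
qed

lemma exact:
  fixes A :: "real^'n^'n"
  assumes nonneg: "\<forall>i j. A $ i $ j \<ge> 0" and noloop: "\<forall>i. A $ i $ i = 0"
  shows "\<not> (\<exists>vs. is_dpath A c i vs \<and> length vs \<le> k) \<Longrightarrow>
         uu (laplacian A) c k i = (-1)^k * uu A c k i"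
proof (induction k arbitrary: i)
  case 0 thus ?case by simp
next
  case (Suc k)
  have t: "laplacian A $ i $ j * uu (laplacian A) c k j = - (A $ i $ j * ((-1)^k * uu A c k j))" for j
  proof (cases "j = i")
    case True
    have "uu (laplacian A) c k i = 0"
    proof (rule ccontr)
      assume "uu (laplacian A) c k i \<noteq> 0"
      then obtain vs where "is_dpath A c i vs \<and> length vs \<le> Suc k" using reach[OF nonneg] by blast
      thus False using Suc.prems by blast
    qed
    thus ?thesis using True noloop by simp
  next
    case False
    show ?thesis
    proof (cases "A $ i $ j = 0")
      case True thus ?thesis using False lap_offdiag[of i j A] by simp
    next
      case nz: False
      hence pos: "A $ i $ j > 0" using nonneg by (metis less_eq_real_def)
      have "\<not> (\<exists>vs. is_dpath A c j vs \<and> length vs \<le> k)"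
      proof
        assume "\<exists>vs. is_dpath A c j vs \<and> length vs \<le> k"
        then obtain vs where vs: "is_dpath A c j vs" "length vs \<le> k" by blast
        then obtain ws where "is_dpath A c i ws" "length ws \<le> Suc (length vs)"
          using path_ext[OF vs(1) pos] by blast
        thus False using Suc.prems vs(2) by fastforce
      qed
      from Suc.IH[OF this] show ?thesis using False lap_offdiag[of i j A] by simp
    qed
  qed
  have "uu (laplacian A) c (Suc k) i = (\<Sum>j\<in>UNIV. - (A $ i $ j * ((-1)^k * uu A c k j)))"
    using t by simp
  also have "\<dots> = (-1)^(Suc k) * (\<Sum>j\<in>UNIV. A $ i $ j * uu A c k j)"
    by (simp add: sum_distrib_left sum_negf algebra_simps)
  finally show ?case by simp
qed

lemma uu_nonneg:
  fixes A :: "real^'n^'n"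
  assumes nonneg: "\<forall>i j. A $ i $ j \<ge> 0"
  shows "0 \<le> uu A c k i"
  by (induction k arbitrary: i) (auto intro!: sum_nonneg simp: nonneg)

lemma uu_pos:
  fixes A :: "real^'n^'n"
  assumes nonneg: "\<forall>i j. A $ i $ j \<ge> 0"
  shows "is_dpath A c w vs \<Longrightarrow> length vs = Suc k \<Longrightarrow> 0 < uu A c k w"
proof (induction k arbitrary: w vs)
  case 0
  then obtain x where "vs = [x]" by (cases vs) auto
  thus ?case using 0 by (auto simp: is_dpath_def)
next
  case (Suc k)
  have vsne: "vs \<noteq> []" and lw: "last vs = w" using Suc.prems by (auto simp: is_dpath_def)
  define vs' where "vs' = butlast vs"
  have vs: "vs = vs' @ [w]" unfolding vs'_def using vsne lw by (metis append_butlast_last_id)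
  have len: "length vs' = Suc k" using vs Suc.prems by simp
  hence ne: "vs' \<noteq> []" by auto
  define w' where "w' = last vs'"
  have w'n: "vs' ! k = w'" unfolding w'_def using ne len by (simp add: last_conv_nth)
  have "is_dpath A c w' vs'"
    unfolding is_dpath_def
  proof (intro conjI allI impI)
    show "vs' \<noteq> []" by fact
    show "hd vs' = c" using Suc.prems ne unfolding vs is_dpath_def by simp
    show "last vs' = w'" by (simp add: w'_def)
    show "distinct vs'" using Suc.prems unfolding vs is_dpath_def by simp
    fix j assume j: "Suc j < length vs'"
    have "Suc j < length vs" using vs j by simp
    hence "0 < A $ (vs ! Suc j) $ (vs ! j)" using Suc.prems by (simp add: is_dpath_def)
    moreover have "vs ! Suc j = vs' ! Suc j" "vs ! j = vs' ! j" using j unfolding vs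
      by (auto simp: nth_append)
    ultimately show "0 < A $ (vs' ! Suc j) $ (vs' ! j)" by simp
  qed
  hence pos1: "0 < uu A c k w'" using Suc.IH len by blast
  have "0 < A $ (vs ! Suc k) $ (vs ! k)" using Suc.prems unfolding is_dpath_def by simp
  hence pos2: "0 < A $ w $ w'" using vs len w'n by (simp add: nth_append)
  have "0 < A $ w $ w' * uu A c k w'" using pos1 pos2 by simp
  also have "\<dots> \<le> (\<Sum>j\<in>UNIV. A $ w $ j * uu A c k j)"
    by (rule member_le_sum) (auto intro!: mult_nonneg_nonneg uu_nonneg nonneg simp: nonneg)
  finally show ?case by simp
qed


theorem corollary2:
  fixes A :: "real^'n^'n" and a b p q :: "real poly" and c ob :: 'n
  assumes nonneg: "\<forall>i j. A $ i $ j \<ge> 0"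
    and noloop: "\<forall>i. A $ i $ i = 0"
    and nz: "a \<noteq> 0" "b \<noteq> 0" "p \<noteq> 0" "q \<noteq> 0"
    and strictly_proper: "degree (b * q) < degree (a * p)"
    and path: "\<exists>vs. is_dpath A c ob vs"
  shows "rel_deg (transfer (openloop a b p q) (laplacian A) c ob)
         = (int (dist_path A c ob) + 1) * (int (degree (a * p)) - int (degree (b * q)))"
proof -
  define L where "L = laplacian A"
  define M where "M = openloop a b p q"
  have bq: "b * q \<noteq> 0" and ap: "a * p \<noteq> 0" using nz by auto
  have vM: "vinf M = int (degree (a * p)) - int (degree (b * q))"
    unfolding M_def openloop_def using vinf_Fract[OF bq ap] .
  have M1: "1 \<le> vinf M" using vM strictly_proper by simp
  have Mnz: "M \<noteq> 0" unfolding M_def openloop_def using bq ap by (simp add: Zero_fract_def eq_fract)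
  define B where "B = mat 1 + (\<chi> i j. M * rconst (L $ i $ j))"
  have Bv: "(B *v x) $ i = x $ i + M * (\<Sum>j\<in>UNIV. rconst (L $ i $ j) * x $ j)" for x i
  proof -
    have "(B *v x) $ i = (\<Sum>j\<in>UNIV. (if i = j then 1 else 0) * x $ j) + (\<Sum>j\<in>UNIV. M * rconst (L $ i $ j) * x $ j)"
      by (simp add: B_def matrix_vector_mult_def mat_def distrib_right sum.distrib)
    moreover have "(\<Sum>j\<in>UNIV. (if i = j then 1 else 0) * x $ j) = (\<Sum>j\<in>UNIV. if i = j then x $ j else 0)"
      by (rule sum.cong) auto
    moreover have "(\<Sum>j\<in>UNIV. if i = j then x $ j else 0) = x $ i" by (simp add: sum.delta)
    ultimately show ?thesis by (simp add: sum_distrib_left mult.assoc)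
  qed
  have ker: "\<forall>x. B *v x = 0 \<longrightarrow> x = 0"
  proof (intro allI impI)
    fix x assume x0: "B *v x = 0"
    have eqx: "x $ i = 0 - M * (\<Sum>j\<in>UNIV. rconst (L $ i $ j) * x $ j)" for i
      using Bv[of x i] x0 by (simp add: eq_neg_iff_add_eq_0)
    have "x $ i = 0" for i
    proof (rule ccontr)
      assume "x $ i \<noteq> 0"
      moreover have "good (vinf (x $ i) + 1) (x $ i)"
        apply (rule key[of M "vinf (x $ i) + 1" "\<lambda>_. 0" "\<lambda>i. x $ i" "\<lambda>i j. L $ i $ j"])
          apply (rule M1)
         apply simp
        apply (rule eqx)
        done
      ultimately show False by (simp add: good_def)
    qed
    thus "x = 0" by (simp add: vec_eq_iff)
  qed
  hence "\<exists>B'. B' ** B = mat 1" by (simp add: matrix_left_invertible_ker)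
  hence inv: "invertible B" by (simp add: invertible_left_inverse)
  have BY: "B ** matrix_inv B = mat 1"
  proof -
    have "B ** matrix_inv B = mat 1 \<and> matrix_inv B ** B = mat 1"
      unfolding matrix_inv_def by (rule someI_ex) (use inv in \<open>simp add: invertible_def\<close>)
    thus ?thesis by simp
  qed
  define Y where "Y = matrix_inv B"
  define y where "y i = Y $ i $ c" for i
  have yeq: "y i = rconst (uu L c 0 i) - M * (\<Sum>j\<in>UNIV. rconst (L $ i $ j) * y j)" for i
  proof -
    have "(B ** Y) $ i $ c = (if i = c then 1 else 0)" using BY unfolding Y_def by (simp add: mat_def)
    moreover have "(B ** Y) $ i $ c = (\<Sum>j\<in>UNIV. B $ i $ j * Y $ j $ c)"
      by (simp add: matrix_matrix_mult_def)
    moreover have "(\<Sum>j\<in>UNIV. B $ i $ j * Y $ j $ c) = y i + M * (\<Sum>j\<in>UNIV. rconst (L $ i $ j) * y j)"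
      using Bv[of "\<chi> j. Y $ j $ c" i] by (simp add: matrix_vector_mult_def y_def)
    ultimately have "y i + M * (\<Sum>j\<in>UNIV. rconst (L $ i $ j) * y j) = rconst (uu L c 0 i)"
      by (cases "i = c") simp_all
    thus ?thesis by (simp add: algebra_simps)
  qed
  have ygood: "good 0 (y i)" for i
    using key[of M 0 "\<lambda>i. rconst (uu L c 0 i)" y "\<lambda>i j. L $ i $ j"] M1 yeq good_rconst by blast
  have T: "transfer M L c ob = y ob * M"
  proof -
    have "transfer M L c ob = (\<Sum>j\<in>UNIV. Y $ ob $ j * (if j = c then M else 0))"
      by (simp add: transfer_def matrix_matrix_mult_def Y_def B_def)
    also have "\<dots> = (\<Sum>j\<in>UNIV. if j = c then Y $ ob $ j * M else 0)"
      by (rule sum.cong) auto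
    also have "\<dots> = y ob * M" by (simp add: sum.delta' y_def)
    finally show ?thesis .
  qed
  define Lop where "Lop z = (\<lambda>i. \<Sum>j\<in>UNIV. rconst (L $ i $ j) * z j)" for z :: "'n \<Rightarrow> ratfun"
  have clA: "(Lop ^^ m) y i = rconst (uu L c m i) - M * (Lop ^^ Suc m) y i" for m i
  proof (induction m arbitrary: i)
    case 0 thus ?case using yeq[of i] by (simp add: Lop_def)
  next
    case (Suc m)
    have "(Lop ^^ Suc m) y i = (\<Sum>j\<in>UNIV. rconst (L $ i $ j) * (Lop ^^ m) y j)"
      by (simp add: Lop_def)
    also have "\<dots> = (\<Sum>j\<in>UNIV. rconst (L $ i $ j) * (rconst (uu L c m j) - M * (Lop ^^ Suc m) y j))"
      using Suc.IH by simp
    also have "\<dots> = rconst (uu L c (Suc m) i) - M * (\<Sum>j\<in>UNIV. rconst (L $ i $ j) * (Lop ^^ Suc m) y j)"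
      by (simp add: right_diff_distrib sum_subtractf rconst_sum rconst_mult
          sum_distrib_left mult.left_commute del: funpow.simps)
    also have "(\<Sum>j\<in>UNIV. rconst (L $ i $ j) * (Lop ^^ Suc m) y j) = (Lop ^^ Suc (Suc m)) y i"
      by (subst (2) funpow.simps(2)) (simp add: Lop_def del: funpow.simps)
    finally show ?case .
  qed
  have clB: "y i = (\<Sum>k<m. (-M)^k * rconst (uu L c k i)) + (-M)^m * (Lop ^^ m) y i" for m i
  proof (induction m)
    case 0 thus ?case by simp
  next
    case (Suc m)
    have "(-M)^m * (Lop ^^ m) y i = (-M)^m * rconst (uu L c m i) + (-M)^(Suc m) * (Lop ^^ Suc m) y i"
      by (subst clA) (simp add: algebra_simps del: funpow.simps)
    thus ?case using Suc.IH by (simp del: funpow.simps)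
  qed
  have clD: "good 0 ((Lop ^^ m) y i)" for m i
  proof (induction m arbitrary: i)
    case 0 thus ?case using ygood by simp
  next
    case (Suc m)
    have e: "(Lop ^^ Suc m) y i = (\<Sum>j\<in>UNIV. rconst (L $ i $ j) * (Lop ^^ m) y j)"
      by (simp add: Lop_def)
    have "good (0 + 0) (\<Sum>j\<in>UNIV. rconst (L $ i $ j) * (Lop ^^ m) y j)"
      by (intro good_sum good_mult good_rconst Suc.IH) simp
    thus ?case using e by simp
  qed
  define d where "d = dist_path A c ob"
  have ex: "\<exists>l vs. is_dpath A c ob vs \<and> length vs = Suc l"
  proof -
    obtain vs where vs: "is_dpath A c ob vs" using path by blast
    hence "vs \<noteq> []" by (simp add: is_dpath_def)
    hence "length vs = Suc (length vs - 1)" by simp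
    thus ?thesis using vs by blast
  qed
  have dmin: "\<exists>vs. is_dpath A c ob vs \<and> length vs = Suc d"
    unfolding d_def dist_path_def by (rule LeastI_ex) (use ex in blast)
  have noshort: "\<not> (\<exists>vs. is_dpath A c ob vs \<and> length vs \<le> k)" if "k \<le> d" for k
  proof
    assume "\<exists>vs. is_dpath A c ob vs \<and> length vs \<le> k"
    then obtain vs where vs: "is_dpath A c ob vs" "length vs \<le> k" by blast
    hence "vs \<noteq> []" by (simp add: is_dpath_def)
    then obtain l where l: "length vs = Suc l" by (cases vs) auto
    hence "l < d" using vs that by simp
    hence "\<not> (\<exists>vs. is_dpath A c ob vs \<and> length vs = Suc l)"
      unfolding d_def dist_path_def by (rule not_less_Least)
    thus False using vs l by blast
  qed
  have zero: "uu L c k ob = 0" if "k < d" for k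
  proof (rule ccontr)
    assume "uu L c k ob \<noteq> 0"
    then obtain vs where "is_dpath A c ob vs \<and> length vs \<le> Suc k"
      using reach[OF nonneg] unfolding L_def by blast
    moreover have "Suc k \<le> d" using that by simp
    ultimately show False using noshort[of "Suc k"] by blast
  qed
  have c0: "uu L c d ob \<noteq> 0"
  proof -
    have "uu L c d ob = (-1)^d * uu A c d ob"
      using exact[OF nonneg noloop noshort[of d]] unfolding L_def by simp
    moreover have "0 < uu A c d ob" using dmin uu_pos[OF nonneg] by blast
    ultimately show ?thesis by simp
  qed
  define R where "R = (Lop ^^ Suc d) y ob"
  have "y ob = (\<Sum>k<Suc d. (-M)^k * rconst (uu L c k ob)) + (-M)^(Suc d) * R"
    unfolding R_def by (rule clB)
  also have "(\<Sum>k<Suc d. (-M)^k * rconst (uu L c k ob)) = (-M)^d * rconst (uu L c d ob)"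
    using zero by simp
  finally have yo: "y ob = (-M)^d * rconst (uu L c d ob) + (-M)^(Suc d) * R" .
  define t1 where "t1 = M * (-M)^d * rconst (uu L c d ob)"
  define t2 where "t2 = M * (-M)^(Suc d) * R"
  have Tsplit: "transfer M L c ob = t1 + t2"
    unfolding T yo t1_def t2_def by (simp add: algebra_simps)
  have mMnz: "- M \<noteq> 0" using Mnz by simp
  have t1nz: "t1 \<noteq> 0" unfolding t1_def using Mnz c0 by simp
  have vt1: "vinf t1 = (int d + 1) * vinf M"
  proof -
    have p: "(-M)^d \<noteq> 0" using mMnz by simp
    have p2: "M * (-M)^d \<noteq> 0" using p Mnz by simp
    have "vinf t1 = vinf (M * (-M)^d) + vinf (rconst (uu L c d ob))"
      unfolding t1_def using p2 c0 by (simp add: vinf_mult)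
    also have "\<dots> = vinf M + vinf ((-M)^d)" using p Mnz by (simp add: vinf_mult vinf_rconst)
    also have "\<dots> = (int d + 1) * vinf M" using mMnz by (simp add: vinf_power vinf_uminus algebra_simps)
    finally show ?thesis .
  qed
  have g2: "good (vinf M + int (Suc d) * vinf M + 0) t2"
    unfolding t2_def
  proof (intro good_mult)
    show "good (vinf M) M" by (rule good_self)
    show "good (int (Suc d) * vinf M) ((-M)^Suc d)"
      unfolding good_def by (rule disjI2) (simp only: vinf_power[OF mMnz] vinf_uminus order_refl)
    show "good 0 R" unfolding R_def by (rule clD)
  qed
  have "good ((int d + 1) * vinf M + 1) t2"
    by (rule good_mono[OF g2]) (use M1 in \<open>simp add: algebra_simps\<close>)
  from vinf_sum_strict[OF t1nz vt1 this]
  have "transfer M L c ob \<noteq> 0" "vinf (transfer M L c ob) = (int d + 1) * vinf M"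
    using Tsplit by auto
  thus ?thesis using rel_deg_vinf vM unfolding M_def L_def d_def by simp
qed

end
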